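(* Let $\omega:\mathbb N\to[1,\infty)$ be a weight on $\mathbb N_{\min}$ with $\sup_n\min(\omega(n),\omega(n+1))=+\infty$. Then $(\ell^1_\omega(\mathbb N_{\min}),M_2(\mathbb C))$ is not an AMNM pair.
   Context: $\mathbb N_{\min}$ is the semilattice $\mathbb N$ with product $\min$; every $\omega:\mathbb N\to[1,\infty)$ is a submultiplicative weight on it. $\ell^1_\omega(\mathbb N_{\min})$ is the Banach space of $a:\mathbb N\to\mathbb C$ with $\|a\|=\sum_n|a(n)|\omega(n)<\infty$, with convolution $\delta_m*\delta_n=\delta_{\min(m,n)}$. $M_2(\mathbb C)$ has the operator norm. For a bounded linear $T:A\to B$ between Banach algebras, $\operatorname{def}(T)=\sup\{\|T(xy)-T(x)T(y)\|:\|x\|,\|y\|\le1\}$ and $\operatorname{Mult}(A,B)$ is the set of bounded multiplicative linear maps (including $0$). $(A,B)$ is an AMNM pair if for every $K>0$, $\varepsilon>0$ there is $\delta>0$ such that every bounded linear $T:A\to B$ with $\|T\|\le K$ and $\operatorname{def}(T)\le\delta$ satisfies $\operatorname{dist}(T,\operatorname{Mult}(A,B))\le\varepsilon$ in operator norm. *)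

theory Defs
  imports "HOL-Analysis.Analysis"
begin

definition l1w :: "(nat \<Rightarrow> real) \<Rightarrow> (nat \<Rightarrow> complex) set" where
  "l1w \<omega> = {a. summable (\<lambda>n. norm (a n) * \<omega> n)}"

definition wnorm :: "(nat \<Rightarrow> real) \<Rightarrow> (nat \<Rightarrow> complex) \<Rightarrow> real" where
  "wnorm \<omega> a = (\<Sum>n. norm (a n) * \<omega> n)"

text \<open>Convolution on N_min: delta_m * delta_n = delta_(min m n), extended bilinearly.\<close>
definition minconv :: "(nat \<Rightarrow> complex) \<Rightarrow> (nat \<Rightarrow> complex) \<Rightarrow> nat \<Rightarrow> complex" where
  "minconv a b k = infsum (\<lambda>(m, n). a m * b n) {(m, n). min m n = k}"

text \<open>Operator norm on M_2(C), with C^2 carrying the Euclidean norm.\<close>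
definition mnorm :: "complex^2^2 \<Rightarrow> real" where
  "mnorm A = onorm (\<lambda>x::complex^2. A *v x)"

definition unit_ball_l1w :: "(nat \<Rightarrow> real) \<Rightarrow> (nat \<Rightarrow> complex) set" where
  "unit_ball_l1w \<omega> = {a \<in> l1w \<omega>. wnorm \<omega> a \<le> 1}"

text \<open>Bounded (complex-)linear maps ell^1_omega(N_min) -> M_2(C) (only values on l1w matter).\<close>
definition bdd_lin :: "(nat \<Rightarrow> real) \<Rightarrow> ((nat \<Rightarrow> complex) \<Rightarrow> complex^2^2) \<Rightarrow> bool" where
  "bdd_lin \<omega> T \<longleftrightarrow>
     (\<forall>a\<in>l1w \<omega>. \<forall>b\<in>l1w \<omega>. T (\<lambda>n. a n + b n) = T a + T b) \<and>
     (\<forall>a\<in>l1w \<omega>. \<forall>c::complex. T (\<lambda>n. c * a n) = (\<chi> i j. c * (T a $ i $ j))) \<and>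
     (\<exists>K. \<forall>a\<in>l1w \<omega>. mnorm (T a) \<le> K * wnorm \<omega> a)"

definition opn :: "(nat \<Rightarrow> real) \<Rightarrow> ((nat \<Rightarrow> complex) \<Rightarrow> complex^2^2) \<Rightarrow> real" where
  "opn \<omega> T = (SUP a\<in>unit_ball_l1w \<omega>. mnorm (T a))"

definition mult_defect :: "(nat \<Rightarrow> real) \<Rightarrow> ((nat \<Rightarrow> complex) \<Rightarrow> complex^2^2) \<Rightarrow> real" where
  "mult_defect \<omega> T = Sup {mnorm (T (minconv a b) - T a ** T b) | a b.
                           a \<in> unit_ball_l1w \<omega> \<and> b \<in> unit_ball_l1w \<omega>}"

definition Mult :: "(nat \<Rightarrow> real) \<Rightarrow> ((nat \<Rightarrow> complex) \<Rightarrow> complex^2^2) set" where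
  "Mult \<omega> = {S. bdd_lin \<omega> S \<and>
               (\<forall>a\<in>l1w \<omega>. \<forall>b\<in>l1w \<omega>. S (minconv a b) = S a ** S b)}"

definition dist_Mult :: "(nat \<Rightarrow> real) \<Rightarrow> ((nat \<Rightarrow> complex) \<Rightarrow> complex^2^2) \<Rightarrow> real" where
  "dist_Mult \<omega> T = (INF S\<in>Mult \<omega>. opn \<omega> (\<lambda>a. T a - S a))"

definition AMNM_pair :: "(nat \<Rightarrow> real) \<Rightarrow> bool" where
  "AMNM_pair \<omega> \<longleftrightarrow>
    (\<forall>K>0. \<forall>\<epsilon>>0. \<exists>\<delta>>0. \<forall>T. bdd_lin \<omega> T \<and> opn \<omega> T \<le> K \<and> mult_defect \<omega> T \<le> \<delta>
        \<longrightarrow> dist_Mult \<omega> T \<le> \<epsilon>)"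

end

theory Submission
  imports Defs
begin


lemma bl_mv: "bounded_linear (\<lambda>x::complex^2. A *v x)"
  by (simp add: linear_conv_bounded_linear)

lemma entry_le_mnorm: "norm (A $ i $ j) \<le> mnorm A"
proof -
  have "norm ((A *v axis j 1) $ i) \<le> norm (A *v axis j 1)"
    using Finite_Cartesian_Product.norm_nth_le by blast
  also have "\<dots> \<le> mnorm A * norm (axis j (1::complex))"
    unfolding mnorm_def by (rule onorm[OF bl_mv])
  moreover have "axis j (1::complex) \<in> Basis" by (auto simp: Basis_vec_def Basis_complex_def)
  then have "norm (axis j (1::complex)) = 1" by (rule norm_Basis)
  moreover have "(A *v axis j 1) $ i = A $ i $ j"
    by (simp add: matrix_vector_mult_def axis_def if_distrib cong: if_cong)
  ultimately show ?thesis by simp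
qed

lemma mnorm_le_entries: "mnorm A \<le> (\<Sum>i\<in>UNIV. \<Sum>j\<in>UNIV. norm (A $ i $ j))"
  unfolding mnorm_def
proof (rule onorm_le)
  fix x :: "complex^2"
  have "norm (A *v x) \<le> (\<Sum>i\<in>UNIV. norm ((A *v x) $ i))" by (simp add: norm_vec_def L2_set_le_sum)
  also have "\<dots> \<le> (\<Sum>i\<in>UNIV. \<Sum>j\<in>UNIV. norm (A $ i $ j) * norm x)"
  proof (rule sum_mono)
    fix i
    have "norm ((A *v x) $ i) = norm (\<Sum>j\<in>UNIV. A $ i $ j * x $ j)"
      by (simp add: matrix_vector_mult_def)
    also have "\<dots> \<le> (\<Sum>j\<in>UNIV. norm (A $ i $ j * x $ j))" by (rule norm_sum)
    also have "\<dots> \<le> (\<Sum>j\<in>UNIV. norm (A $ i $ j) * norm x)"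
      by (rule sum_mono) (simp add: norm_mult mult_left_mono[OF Finite_Cartesian_Product.norm_nth_le])
    finally show "norm ((A *v x) $ i) \<le> (\<Sum>j\<in>UNIV. norm (A $ i $ j) * norm x)" .
  qed
  also have "\<dots> = (\<Sum>i\<in>UNIV. \<Sum>j\<in>UNIV. norm (A $ i $ j)) * norm x"
    by (simp add: sum_distrib_right)
  finally show "norm (A *v x) \<le> (\<Sum>i\<in>UNIV. \<Sum>j\<in>UNIV. norm (A $ i $ j)) * norm x" .
qed

lemma mnorm_le2: "mnorm A \<le> norm (A$1$1) + norm (A$1$2) + norm (A$2$1) + norm (A$2$2)"
  using mnorm_le_entries[of A] by (simp add: sum_2)

lemma mnorm_nonneg: "0 \<le> mnorm A"
  using entry_le_mnorm[of A 1 1] norm_ge_zero order_trans by blast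



definition tlsum :: "(nat \<Rightarrow> complex) \<Rightarrow> nat \<Rightarrow> complex" where
  "tlsum a k = infsum a {k..}"

lemma l1w_abs:
  assumes w: "\<forall>n. \<omega> n \<ge> 1" and a: "a \<in> l1w \<omega>"
  shows "(\<lambda>n. norm (a n)) summable_on UNIV"
proof -
  have s: "summable (\<lambda>n. norm (a n) * \<omega> n)" using a by (simp add: l1w_def)
  have "summable (\<lambda>n. norm (a n))"
  proof (rule summable_comparison_test'[OF s])
    fix n show "norm (norm (a n)) \<le> norm (a n) * \<omega> n"
      using w mult_left_mono[of 1 "\<omega> n" "norm (a n)"] by simp
  qed
  then show ?thesis by (intro norm_summable_imp_summable_on) simp
qed

lemma l1w_summable:
  assumes w: "\<forall>n. \<omega> n \<ge> 1" and a: "a \<in> l1w \<omega>"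
  shows "a summable_on A"
proof -
  have "a summable_on UNIV" using l1w_abs[OF w a] by (rule abs_summable_summable)
  then show ?thesis by (rule summable_on_subset_banach) simp
qed

lemma prod_abs_summable:
  fixes a b :: "nat \<Rightarrow> complex"
  assumes a: "(\<lambda>n. norm (a n)) summable_on UNIV" and b: "(\<lambda>n. norm (b n)) summable_on UNIV"
  shows "(\<lambda>(i,j). a i * b j) summable_on UNIV"
proof -
  have "(\<lambda>p. norm ((\<lambda>(i,j). a i * b j) p)) summable_on Sigma UNIV (\<lambda>_. UNIV)"
  proof (rule Infinite_Sum.abs_summable_on_Sigma_iff[THEN iffD2], intro conjI ballI)
    fix x :: nat
    show "(\<lambda>y. norm ((\<lambda>(i,j). a i * b j) (x, y))) summable_on UNIV"
      using summable_on_cmult_right[OF b, of "norm (a x)"] by (simp add: norm_mult)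
  next
    have "(\<lambda>x. norm (a x) * infsum (\<lambda>y. norm (b y)) UNIV) summable_on UNIV"
      using summable_on_cmult_left[OF a] by simp
    moreover have "(\<Sum>\<^sub>\<infinity>y. norm ((\<lambda>(i,j). a i * b j) (x, y))) = norm (a x) * infsum (\<lambda>y. norm (b y)) UNIV" for x
      by (simp add: norm_mult infsum_cmult_right')
    ultimately show "(\<lambda>x. norm (\<Sum>\<^sub>\<infinity>y. norm ((\<lambda>(i,j). a i * b j) (x, y)))) summable_on UNIV"
      by (simp add: infsum_nonneg)
  qed
  then have "(\<lambda>(i,j). a i * b j) summable_on Sigma UNIV (\<lambda>_. UNIV)"
    by (rule abs_summable_summable)
  then show ?thesis by simp
qed

lemma abs_sub: "(\<lambda>n. norm (a n)) summable_on UNIV \<Longrightarrow> (a::nat\<Rightarrow>complex) summable_on A"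
  by (rule summable_on_subset_banach[OF abs_summable_summable]) auto

lemma tlsum_Suc:
  assumes a: "(\<lambda>n. norm (a n)) summable_on UNIV"
  shows "tlsum a k = a k + tlsum a (Suc k)"
proof -
  have "{k..} = insert k {Suc k..}" by auto
  then show ?thesis unfolding tlsum_def
    using infsum_insert[OF abs_sub[OF a], of k "{Suc k..}"] by simp
qed

lemma minconv_formula:
  fixes a b :: "nat \<Rightarrow> complex"
  assumes a: "(\<lambda>n. norm (a n)) summable_on UNIV" and b: "(\<lambda>n. norm (b n)) summable_on UNIV"
  shows "minconv a b k = a k * tlsum b k + b k * tlsum a (Suc k)"
proof -
  define F where "F = (\<lambda>(i,j). a i * b j)"
  have F: "F summable_on A" for A
    unfolding F_def by (rule summable_on_subset_banach[OF prod_abs_summable[OF a b]]) auto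
  have set: "{(m, n). min m n = k} = Sigma {k} (\<lambda>_. {k..}) \<union> Sigma {Suc k..} (\<lambda>_. {k})"
    by auto
  have d: "Sigma {k} (\<lambda>_. {k..}) \<inter> Sigma {Suc k..} (\<lambda>_. {k}) = {}" by auto
  have 1: "infsum F (Sigma {k} (\<lambda>_. {k..})) = a k * tlsum b k"
  proof -
    have "infsum F (Sigma {k} (\<lambda>_. {k..})) = infsum (\<lambda>x. infsum (\<lambda>y. F (x,y)) {k..}) {k}"
      by (rule infsum_Sigma_banach[symmetric, OF F])
    also have "\<dots> = infsum (\<lambda>y. a k * b y) {k..}" by (simp add: F_def)
    also have "\<dots> = a k * tlsum b k" by (simp add: tlsum_def infsum_cmult_right')
    finally show ?thesis .
  qed
  have 2: "infsum F (Sigma {Suc k..} (\<lambda>_. {k})) = b k * tlsum a (Suc k)"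
  proof -
    have "infsum F (Sigma {Suc k..} (\<lambda>_. {k})) = infsum (\<lambda>x. infsum (\<lambda>y. F (x,y)) {k}) {Suc k..}"
      by (rule infsum_Sigma_banach[symmetric, OF F])
    also have "\<dots> = infsum (\<lambda>x. a x * b k) {Suc k..}" by (simp add: F_def)
    also have "\<dots> = b k * tlsum a (Suc k)" by (simp add: tlsum_def infsum_cmult_left' mult.commute)
    finally show ?thesis .
  qed
  have "minconv a b k = infsum F {(m, n). min m n = k}"
    by (simp add: minconv_def F_def)
  also have "\<dots> = infsum F (Sigma {k} (\<lambda>_. {k..})) + infsum F (Sigma {Suc k..} (\<lambda>_. {k}))"
    unfolding set by (rule infsum_Un_disjoint[OF F F d])
  finally show ?thesis using 1 2 by simp
qed

lemma minconv_tlsum: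
  fixes a b :: "nat \<Rightarrow> complex"
  assumes a: "(\<lambda>n. norm (a n)) summable_on UNIV" and b: "(\<lambda>n. norm (b n)) summable_on UNIV"
  shows "tlsum (minconv a b) m = tlsum a m * tlsum b m"
proof -
  define F where "F = (\<lambda>(i,j). a i * b j)"
  have F: "F summable_on A" for A
    unfolding F_def by (rule summable_on_subset_banach[OF prod_abs_summable[OF a b]]) auto
  define B where "B = (\<lambda>k::nat. {(i::nat, j::nat). min i j = k})"
  have inj: "inj_on snd (Sigma {m..} B)" by (auto simp: inj_on_def B_def)
  have img: "snd ` (Sigma {m..} B) = {m..} \<times> {m..}"
  proof (rule set_eqI, rule iffI)
    fix p assume "p \<in> snd ` (Sigma {m..} B)" then show "p \<in> {m..} \<times> {m..}"
      by (auto simp: B_def)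
  next
    fix p assume "p \<in> {m..} \<times> {m..}"
    then have "(min (fst p) (snd p), p) \<in> Sigma {m..} B" by (auto simp: B_def)
    then show "p \<in> snd ` (Sigma {m..} B)" by (rule image_eqI[rotated]) simp
  qed
  have Fs: "(\<lambda>(k, p). F p) summable_on Sigma {m..} B"
  proof -
    have "(F \<circ> snd) summable_on Sigma {m..} B"
      using summable_on_reindex[OF inj, of F] F by simp
    then show ?thesis by (simp add: o_def case_prod_unfold)
  qed
  have "tlsum (minconv a b) m = infsum (\<lambda>k. infsum F (B k)) {m..}"
    unfolding tlsum_def F_def B_def by (simp add: minconv_def[abs_def])
  also have "\<dots> = infsum (\<lambda>(k, p). F p) (Sigma {m..} B)"
    by (rule infsum_Sigma'_banach[OF Fs])
  also have "\<dots> = infsum (F \<circ> snd) (Sigma {m..} B)"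
    by (simp add: o_def case_prod_unfold)
  also have "\<dots> = infsum F (snd ` (Sigma {m..} B))"
    by (rule infsum_reindex[OF inj, symmetric])
  also have "\<dots> = infsum F (Sigma {m..} (\<lambda>_. {m..}))" by (simp add: img)
  also have "\<dots> = infsum (\<lambda>x. infsum (\<lambda>y. F (x,y)) {m..}) {m..}"
    by (rule infsum_Sigma_banach[symmetric, OF F])
  also have "\<dots> = infsum (\<lambda>x. a x * tlsum b m) {m..}"
    by (simp add: F_def tlsum_def infsum_cmult_right')
  also have "\<dots> = tlsum a m * tlsum b m"
    by (simp add: tlsum_def infsum_cmult_left')
  finally show ?thesis .
qed



definition dl :: "nat \<Rightarrow> nat \<Rightarrow> complex" where
  "dl j = (\<lambda>k. if k = j then 1 else 0)"

lemma dl_abs: "(\<lambda>n. norm (dl j n)) summable_on UNIV"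
proof -
  have "(\<lambda>n. norm (dl j n)) summable_on {j}" by simp
  then show ?thesis
    by (rule summable_on_cong_neutral[THEN iffD1, rotated -1]) (auto simp: dl_def)
qed

lemma tlsum_dl: "tlsum (dl j) k = (if k \<le> j then 1 else 0)"
proof -
  have "tlsum (dl j) k = infsum (dl j) (if k \<le> j then {j} else {})"
    unfolding tlsum_def by (rule infsum_cong_neutral) (auto simp: dl_def split: if_splits)
  then show ?thesis by (simp add: dl_def)
qed

lemma minconv_dl: "minconv (dl i) (dl j) = dl (min i j)"
proof
  fix k
  show "minconv (dl i) (dl j) k = dl (min i j) k"
    by (simp add: minconv_formula[OF dl_abs dl_abs] tlsum_dl) (auto simp: dl_def)
qed

lemma dl_l1w: "dl j \<in> l1w \<omega>"
  unfolding l1w_def mem_Collect_eq by (rule summable_finite[of "{j}"]) (auto simp: dl_def)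

lemma wnorm_nonneg: "a \<in> l1w \<omega> \<Longrightarrow> \<forall>n. \<omega> n \<ge> 1 \<Longrightarrow> 0 \<le> wnorm \<omega> a"
  unfolding wnorm_def l1w_def
  by (rule suminf_nonneg) (auto, metis norm_ge_zero mult_nonneg_nonneg order_trans zero_le_one)

lemma wnorm_infsum:
  assumes "a \<in> l1w \<omega>" "\<forall>n. \<omega> n \<ge> 1"
  shows "wnorm \<omega> a = infsum (\<lambda>n. norm (a n) * \<omega> n) UNIV"
    and "(\<lambda>n. norm (a n) * \<omega> n) summable_on UNIV"
proof -
  have s: "summable (\<lambda>n. norm (a n) * \<omega> n)" using assms by (simp add: l1w_def)
  have nn: "\<And>n. 0 \<le> norm (a n) * \<omega> n" using assms(2)
    by (metis norm_ge_zero mult_nonneg_nonneg order_trans zero_le_one)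
  have h: "((\<lambda>n. norm (a n) * \<omega> n) has_sum wnorm \<omega> a) UNIV"
    unfolding wnorm_def by (rule sums_nonneg_imp_has_sum[OF summable_sums[OF s] nn])
  show "wnorm \<omega> a = infsum (\<lambda>n. norm (a n) * \<omega> n) UNIV"
    using h by (simp add: infsumI)
  show "(\<lambda>n. norm (a n) * \<omega> n) summable_on UNIV" using h by (auto simp: summable_on_def)
qed

lemma g_summable:
  assumes "a \<in> l1w \<omega>" "\<forall>n. \<omega> n \<ge> 1"
  shows "(\<lambda>n. norm (a n) * \<omega> n) summable_on A"
  by (rule summable_on_subset_banach[OF wnorm_infsum(2)[OF assms]]) simp

lemma g_nonneg: "\<forall>n. \<omega> n \<ge> 1 \<Longrightarrow> 0 \<le> norm (a n) * \<omega> n"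
  by (metis norm_ge_zero mult_nonneg_nonneg order_trans zero_le_one)

lemma coord_le_wnorm:
  assumes "a \<in> l1w \<omega>" "\<forall>n. \<omega> n \<ge> 1"
  shows "norm (a k) * \<omega> k \<le> wnorm \<omega> a"
proof -
  have "infsum (\<lambda>n. norm (a n) * \<omega> n) {k} \<le> infsum (\<lambda>n. norm (a n) * \<omega> n) UNIV"
    by (rule infsum_mono2) (auto intro: g_summable[OF assms] g_nonneg[OF assms(2)])
  then show ?thesis using wnorm_infsum(1)[OF assms] by simp
qed

lemma tail_bound:
  assumes a: "a \<in> l1w \<omega>" and w: "\<forall>n. \<omega> n \<ge> 1"
  shows "norm (tlsum a (n+2)) + norm (a n) * \<omega> n + norm (a (Suc n)) * \<omega> (Suc n) \<le> wnorm \<omega> a"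
proof -
  define g where "g = (\<lambda>n. norm (a n) * \<omega> n)"
  have gs: "g summable_on A" for A unfolding g_def by (rule g_summable[OF a w])
  have gn: "0 \<le> g k" for k unfolding g_def by (rule g_nonneg[OF w])
  have ins: "infsum g {k..} = g k + infsum g {Suc k..}" for k
  proof -
    have "{k..} = insert k {Suc k..}" by auto
    then show ?thesis using infsum_insert[OF gs, of k "{Suc k..}"] by simp
  qed
  have "norm (tlsum a (n+2)) \<le> infsum (\<lambda>k. norm (a k)) {n+2..}"
    unfolding tlsum_def
    by (rule norm_infsum_bound, rule summable_on_subset_banach[OF l1w_abs[OF w a]]) simp
  also have "\<dots> \<le> infsum g {n+2..}"
  proof (rule infsum_mono)
    show "(\<lambda>k. norm (a k)) summable_on {n+2..}"
      by (rule summable_on_subset_banach[OF l1w_abs[OF w a]]) simp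
    show "g summable_on {n+2..}" by (rule gs)
    fix k show "norm (a k) \<le> g k" unfolding g_def
      using w mult_left_mono[of 1 "\<omega> k" "norm (a k)"] by simp
  qed
  finally have 1: "norm (tlsum a (n+2)) \<le> infsum g {n+2..}" .
  have "infsum g {n..} \<le> infsum g UNIV"
    by (rule infsum_mono2) (auto intro: gs gn)
  moreover have "infsum g {n..} = g n + g (Suc n) + infsum g {n+2..}"
    using ins[of n] ins[of "Suc n"] by simp
  moreover have "wnorm \<omega> a = infsum g UNIV" unfolding g_def by (rule wnorm_infsum(1)[OF a w])
  ultimately show ?thesis using 1 unfolding g_def by simp
qed

definition Tm :: "(nat \<Rightarrow> real) \<Rightarrow> nat \<Rightarrow> (nat \<Rightarrow> complex) \<Rightarrow> complex^2^2" where
  "Tm \<omega> n a = (\<chi> i j. if i = j then tlsum a (n+2)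
      else if i = 1 \<and> j = 2 then complex_of_real (\<omega> n) * a n - complex_of_real (\<omega> (Suc n)) * a (Suc n)
      else 0)"

lemma Tm_entries:
  "Tm \<omega> n a $ 1 $ 1 = tlsum a (n+2)"
  "Tm \<omega> n a $ 2 $ 2 = tlsum a (n+2)"
  "Tm \<omega> n a $ 1 $ 2 = complex_of_real (\<omega> n) * a n - complex_of_real (\<omega> (Suc n)) * a (Suc n)"
  "Tm \<omega> n a $ 2 $ 1 = 0"
  by (simp_all add: Tm_def)

lemma mnorm_Tm:
  assumes a: "a \<in> l1w \<omega>" and w: "\<forall>n. \<omega> n \<ge> 1"
  shows "mnorm (Tm \<omega> n a) \<le> 2 * wnorm \<omega> a"
proof -
  have "mnorm (Tm \<omega> n a) \<le> 2 * norm (tlsum a (n+2)) + norm (complex_of_real (\<omega> n) * a n - complex_of_real (\<omega> (Suc n)) * a (Suc n))"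
    using mnorm_le2[of "Tm \<omega> n a"] by (simp add: Tm_entries)
  also have "norm (complex_of_real (\<omega> n) * a n - complex_of_real (\<omega> (Suc n)) * a (Suc n))
      \<le> norm (a n) * \<omega> n + norm (a (Suc n)) * \<omega> (Suc n)"
  proof -
    have "norm (complex_of_real (\<omega> n) * a n - complex_of_real (\<omega> (Suc n)) * a (Suc n))
      \<le> norm (complex_of_real (\<omega> n) * a n) + norm (complex_of_real (\<omega> (Suc n)) * a (Suc n))"
      by (rule norm_triangle_ineq4)
    moreover have "\<omega> n \<ge> 0" "\<omega> (Suc n) \<ge> 0" using w by (auto intro: order_trans[OF zero_le_one])
    ultimately show ?thesis by (simp add: norm_mult mult.commute)
  qed
  finally show ?thesis using tail_bound[OF a w, of n] wnorm_nonneg[OF a w] g_nonneg[OF w, of a n] g_nonneg[OF w, of a "Suc n"] by simp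
qed

lemma tlsum_add:
  assumes "a \<in> l1w \<omega>" "b \<in> l1w \<omega>" "\<forall>n. \<omega> n \<ge> 1"
  shows "tlsum (\<lambda>n. a n + b n) k = tlsum a k + tlsum b k"
  unfolding tlsum_def by (rule infsum_add; rule l1w_summable[OF assms(3)]; fact)

lemma tlsum_cmult: "tlsum (\<lambda>n. c * a n) k = c * tlsum a k"
  unfolding tlsum_def by (rule infsum_cmult_right')

lemma bdd_lin_Tm:
  assumes w: "\<forall>n. \<omega> n \<ge> 1"
  shows "bdd_lin \<omega> (Tm \<omega> n)"
  unfolding bdd_lin_def
proof (intro conjI ballI allI)
  fix a b assume "a \<in> l1w \<omega>" "b \<in> l1w \<omega>"
  then show "Tm \<omega> n (\<lambda>n. a n + b n) = Tm \<omega> n a + Tm \<omega> n b"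
    by (simp add: Tm_def vec_eq_iff tlsum_add[OF _ _ w] algebra_simps)
next
  fix a c assume "a \<in> l1w \<omega>"
  show "Tm \<omega> n (\<lambda>n. c * a n) = (\<chi> i j. c * (Tm \<omega> n a $ i $ j))"
    by (simp add: Tm_def vec_eq_iff tlsum_cmult algebra_simps)
next
  show "\<exists>K. \<forall>a\<in>l1w \<omega>. mnorm (Tm \<omega> n a) \<le> K * wnorm \<omega> a"
    using mnorm_Tm[OF _ w] by blast
qed



lemma tb:
  fixes x y w M :: real
  assumes "0 \<le> x" "x \<le> 1" "0 \<le> y" "y * w \<le> 1" "M \<le> w" "0 < M"
  shows "x * y \<le> 1 / M"
proof -
  have "y \<le> 1 / w" using assms by (simp add: field_simps)
  also have "\<dots> \<le> 1 / M" using assms by (simp add: frac_le)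
  finally have "y \<le> 1 / M" .
  moreover have "x * y \<le> y" using assms mult_right_mono[of x 1 y] by simp
  ultimately show ?thesis by simp
qed

lemma defect_Tm:
  assumes w: "\<forall>n. \<omega> n \<ge> 1" and a: "a \<in> l1w \<omega>" and b: "b \<in> l1w \<omega>"
    and na: "wnorm \<omega> a \<le> 1" and nb: "wnorm \<omega> b \<le> 1"
  shows "mnorm (Tm \<omega> n (minconv a b) - Tm \<omega> n a ** Tm \<omega> n b) \<le> 4 / min (\<omega> n) (\<omega> (Suc n))"
proof -
  define M where "M = min (\<omega> n) (\<omega> (Suc n))"
  have M0: "0 < M" "M \<le> \<omega> n" "M \<le> \<omega> (Suc n)" using w unfolding M_def
    by (auto simp: min_def intro: less_le_trans[OF zero_less_one])
  have aa: "(\<lambda>n. norm (a n)) summable_on UNIV" by (rule l1w_abs[OF w a])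
  have bb: "(\<lambda>n. norm (b n)) summable_on UNIV" by (rule l1w_abs[OF w b])
  note ts = tlsum_Suc[OF aa, of n] tlsum_Suc[OF aa, of "Suc n"] tlsum_Suc[OF bb, of n] tlsum_Suc[OF bb, of "Suc n"]
  define X where "X = Tm \<omega> n (minconv a b) - Tm \<omega> n a ** Tm \<omega> n b"
  define wn wn1 where "wn = complex_of_real (\<omega> n)" and "wn1 = complex_of_real (\<omega> (Suc n))"
  have e11: "X $ 1 $ 1 = 0" "X $ 2 $ 2 = 0" "X $ 2 $ 1 = 0"
    unfolding X_def
    by (simp_all add: matrix_matrix_mult_def sum_2 Tm_entries minconv_tlsum[OF aa bb])
  have e12: "X $ 1 $ 2 = wn * (a n * b n + a n * b (Suc n) + b n * a (Suc n)) - wn1 * (a (Suc n) * b (Suc n))"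
    unfolding X_def wn_def wn1_def
    by (simp add: matrix_matrix_mult_def sum_2 Tm_entries minconv_formula[OF aa bb] ts algebra_simps)
  have xa: "norm (a k) * \<omega> k \<le> 1" for k using coord_le_wnorm[OF a w, of k] na by simp
  have xb: "norm (b k) * \<omega> k \<le> 1" for k using coord_le_wnorm[OF b w, of k] nb by simp
  have pa: "0 \<le> norm (a k) * \<omega> k" for k by (rule g_nonneg[OF w])
  have pb: "0 \<le> norm (b k) * \<omega> k" for k by (rule g_nonneg[OF w])
  have t1: "(norm (a n) * \<omega> n) * norm (b n) \<le> 1 / M"
    by (rule tb[OF pa xa _ xb M0(2) M0(1)]) simp
  have t2: "(norm (a n) * \<omega> n) * norm (b (Suc n)) \<le> 1 / M"
    by (rule tb[OF pa xa _ xb M0(3) M0(1)]) simp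
  have t3: "(norm (b n) * \<omega> n) * norm (a (Suc n)) \<le> 1 / M"
    by (rule tb[OF pb xb _ xa M0(3) M0(1)]) simp
  have t4: "(norm (a (Suc n)) * \<omega> (Suc n)) * norm (b (Suc n)) \<le> 1 / M"
    by (rule tb[OF pa xa _ xb M0(3) M0(1)]) simp
  have wpos: "\<omega> n \<ge> 0" "\<omega> (Suc n) \<ge> 0" using w by (auto intro: order_trans[OF zero_le_one])
  have "norm (X $ 1 $ 2) \<le> norm (wn * (a n * b n)) + norm (wn * (a n * b (Suc n))) + norm (wn * (b n * a (Suc n))) + norm (wn1 * (a (Suc n) * b (Suc n)))"
    unfolding e12 distrib_left
    by (rule order_trans[OF norm_triangle_ineq4]) (simp add: norm_triangle_le norm_triangle_ineq)
  also have "\<dots> = (norm (a n) * \<omega> n) * norm (b n) + (norm (a n) * \<omega> n) * norm (b (Suc n))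
      + (norm (b n) * \<omega> n) * norm (a (Suc n)) + (norm (a (Suc n)) * \<omega> (Suc n)) * norm (b (Suc n))"
    using wpos by (simp add: wn_def wn1_def norm_mult)
  also have "\<dots> \<le> 4 / M" using t1 t2 t3 t4 by simp
  finally have "norm (X $ 1 $ 2) \<le> 4 / M" .
  then have "mnorm X \<le> 4 / M" using mnorm_le2[of X] e11 by simp
  then show ?thesis unfolding X_def M_def .
qed



lemma idem_contra:
  fixes P Q :: "complex^2^2"
  assumes PP: "P ** P = P" and QQ: "Q ** Q = Q" and PQ: "P ** Q = P" and QP: "Q ** P = P"
    and rp: "Re (P $ 1 $ 2) > 0" and rq: "Re (Q $ 1 $ 2) < 0"
  shows False
proof -
  define p11 where "p11 = P$1$1"
  define p12 where "p12 = P$1$2"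
  define p22 where "p22 = P$2$2"
  define q11 where "q11 = Q$1$1"
  define q12 where "q12 = Q$1$2"
  define q22 where "q22 = Q$2$2"
  have e1: "p11 * p12 + p12 * p22 = p12"
    using arg_cong[OF PP, of "\<lambda>M. M$1$2"] by (simp add: matrix_matrix_mult_def sum_2 p11_def p12_def p22_def)
  have e2: "q11 * q12 + q12 * q22 = q12"
    using arg_cong[OF QQ, of "\<lambda>M. M$1$2"] by (simp add: matrix_matrix_mult_def sum_2 q11_def q12_def q22_def)
  have e3: "p11 * q12 + p12 * q22 = p12"
    using arg_cong[OF PQ, of "\<lambda>M. M$1$2"] by (simp add: matrix_matrix_mult_def sum_2 p11_def p12_def q22_def q12_def)
  have e4: "q11 * p12 + q12 * p22 = p12"
    using arg_cong[OF QP, of "\<lambda>M. M$1$2"] by (simp add: matrix_matrix_mult_def sum_2 q11_def p12_def p22_def q12_def)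
  have p0: "p12 \<noteq> 0" using rp p12_def by auto
  have q0: "q12 \<noteq> 0" using rq q12_def by auto
  have tp: "p11 + p22 = 1"
  proof -
    have "p12 * (p11 + p22 - 1) = 0" using e1 by (simp add: algebra_simps)
    then show ?thesis using p0 by simp
  qed
  have tq: "q11 + q22 = 1"
  proof -
    have "q12 * (q11 + q22 - 1) = 0" using e2 by (simp add: algebra_simps)
    then show ?thesis using q0 by simp
  qed
  have "q12 * (p11 + p22) + p12 * (q11 + q22) = 2 * p12"
  proof -
    have "q12 * (p11 + p22) + p12 * (q11 + q22) = (p11 * q12 + p12 * q22) + (q11 * p12 + q12 * p22)"
      by (simp add: algebra_simps)
    also have "\<dots> = 2 * p12" using e3 e4 by simp
    finally show ?thesis .
  qed
  then have "q12 = p12" using tp tq by simp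
  then show False using rp rq p12_def q12_def by simp
qed

lemma zero_Mult: "(\<lambda>a. 0) \<in> Mult \<omega>"
proof -
  have "mnorm 0 \<le> 0" using mnorm_le2[of 0] by simp
  then show ?thesis unfolding Mult_def bdd_lin_def by (auto simp: vec_eq_iff intro: exI[of _ 0])
qed

lemma scaled_dl:
  assumes w: "\<forall>n. \<omega> n \<ge> 1"
  shows "(\<lambda>k. complex_of_real (1 / \<omega> j) * dl j k) \<in> unit_ball_l1w \<omega>"
proof -
  define u where "u = (\<lambda>k. complex_of_real (1 / \<omega> j) * dl j k)"
  have wj: "\<omega> j > 0" using w by (auto intro: less_le_trans[OF zero_less_one])
  have ul: "u \<in> l1w \<omega>"
    unfolding l1w_def mem_Collect_eq u_def by (rule summable_finite[of "{j}"]) (auto simp: dl_def)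
  have "wnorm \<omega> u = infsum (\<lambda>n. norm (u n) * \<omega> n) UNIV" by (rule wnorm_infsum(1)[OF ul w])
  also have "\<dots> = infsum (\<lambda>n. norm (u n) * \<omega> n) {j}"
    by (rule infsum_cong_neutral) (auto simp: u_def dl_def)
  also have "\<dots> = 1" using wj by (simp add: u_def dl_def norm_divide)
  finally show ?thesis using ul by (simp add: unit_ball_l1w_def u_def)
qed

lemma opn_lower:
  assumes w: "\<forall>n. \<omega> n \<ge> 1" and S: "S \<in> Mult \<omega>"
  shows "opn \<omega> (\<lambda>a. Tm \<omega> n a - S a) \<ge> 1/2"
proof (rule ccontr)
  assume neg: "\<not> opn \<omega> (\<lambda>a. Tm \<omega> n a - S a) \<ge> 1/2"
  have bl: "bdd_lin \<omega> S" and mult: "\<And>a b. a \<in> l1w \<omega> \<Longrightarrow> b \<in> l1w \<omega> \<Longrightarrow> S (minconv a b) = S a ** S b"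
    using S by (auto simp: Mult_def)
  obtain K where K: "\<And>a. a \<in> l1w \<omega> \<Longrightarrow> mnorm (S a) \<le> K * wnorm \<omega> a"
    using bl unfolding bdd_lin_def by blast
  have sc: "\<And>a c. a \<in> l1w \<omega> \<Longrightarrow> S (\<lambda>n. c * a n) = (\<chi> i j. c * (S a $ i $ j))"
    using bl unfolding bdd_lin_def by blast
  have bdd: "bdd_above ((\<lambda>a. mnorm (Tm \<omega> n a - S a)) ` unit_ball_l1w \<omega>)"
  proof (rule bdd_aboveI2)
    fix a assume "a \<in> unit_ball_l1w \<omega>"
    then have al: "a \<in> l1w \<omega>" and an: "wnorm \<omega> a \<le> 1" by (auto simp: unit_ball_l1w_def)
    have a0: "0 \<le> wnorm \<omega> a" by (rule wnorm_nonneg[OF al w])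
    have m1: "mnorm (Tm \<omega> n a) \<le> 2" using mnorm_Tm[OF al w, of n] an by simp
    have "mnorm (S a) \<le> K * wnorm \<omega> a" by (rule K[OF al])
    also have "\<dots> \<le> \<bar>K\<bar> * wnorm \<omega> a" using a0 by (simp add: mult_right_mono)
    also have "\<dots> \<le> \<bar>K\<bar>" using a0 an mult_left_mono[of "wnorm \<omega> a" 1 "\<bar>K\<bar>"] by simp
    finally have m2: "mnorm (S a) \<le> \<bar>K\<bar>" .
    have ent: "norm ((Tm \<omega> n a - S a) $ i $ j) \<le> 2 + \<bar>K\<bar>" for i j
    proof -
      have "norm ((Tm \<omega> n a - S a) $ i $ j) \<le> norm (Tm \<omega> n a $ i $ j) + norm (S a $ i $ j)"
        by (simp add: norm_triangle_ineq4)
      also have "\<dots> \<le> mnorm (Tm \<omega> n a) + mnorm (S a)" by (intro add_mono entry_le_mnorm)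
      finally show ?thesis using m1 m2 by simp
    qed
    show "mnorm (Tm \<omega> n a - S a) \<le> 4 * (2 + \<bar>K\<bar>)"
      using mnorm_le2[of "Tm \<omega> n a - S a"] ent[of 1 1] ent[of 1 2] ent[of 2 1] ent[of 2 2] by simp
  qed
  have low: "mnorm (Tm \<omega> n u - S u) < 1/2" if "u \<in> unit_ball_l1w \<omega>" for u
  proof -
    have "mnorm (Tm \<omega> n u - S u) \<le> opn \<omega> (\<lambda>a. Tm \<omega> n a - S a)"
      unfolding opn_def by (rule cSUP_upper[OF that bdd])
    then show ?thesis using neg by simp
  qed
  have wpos: "\<omega> k > 0" for k using w by (auto intro: less_le_trans[OF zero_less_one])
  define P Q where "P = S (dl n)" and "Q = S (dl (Suc n))"
  have PP: "P ** P = P" using mult[OF dl_l1w dl_l1w, of n n] by (simp add: minconv_dl P_def)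
  have QQ: "Q ** Q = Q" using mult[OF dl_l1w dl_l1w, of "Suc n" "Suc n"] by (simp add: minconv_dl Q_def)
  have PQ: "P ** Q = P" using mult[OF dl_l1w dl_l1w, of n "Suc n"] by (simp add: minconv_dl P_def Q_def)
  have QP: "Q ** P = P" using mult[OF dl_l1w dl_l1w, of "Suc n" n] by (simp add: minconv_dl P_def Q_def)
  define c where "c = 1 / \<omega> n"
  define c' where "c' = 1 / \<omega> (Suc n)"
  define u where "u = (\<lambda>k. complex_of_real c * dl n k)"
  define v where "v = (\<lambda>k. complex_of_real c' * dl (Suc n) k)"
  have ub: "u \<in> unit_ball_l1w \<omega>" unfolding u_def c_def by (rule scaled_dl[OF w])
  have vb: "v \<in> unit_ball_l1w \<omega>" unfolding v_def c'_def by (rule scaled_dl[OF w])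
  have Su: "S u $ 1 $ 2 = complex_of_real c * P $ 1 $ 2"
    unfolding u_def P_def by (simp add: sc[OF dl_l1w])
  have Sv: "S v $ 1 $ 2 = complex_of_real c' * Q $ 1 $ 2"
    unfolding v_def Q_def by (simp add: sc[OF dl_l1w])
  have Tu: "Tm \<omega> n u $ 1 $ 2 = 1"
    unfolding u_def c_def using wpos[of n] by (simp add: Tm_entries dl_def)
  have Tv: "Tm \<omega> n v $ 1 $ 2 = -1"
    unfolding v_def c'_def using wpos[of "Suc n"] by (simp add: Tm_entries dl_def)
  have "norm (1 - complex_of_real c * P $ 1 $ 2) < 1/2"
    using entry_le_mnorm[of "Tm \<omega> n u - S u" 1 2] low[OF ub] Tu Su by simp
  then have "Re (1 - complex_of_real c * P $ 1 $ 2) < 1/2"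
    using abs_Re_le_cmod[of "1 - complex_of_real c * P $ 1 $ 2"] by linarith
  then have "c * Re (P $ 1 $ 2) > 0" by simp
  then have rp: "Re (P $ 1 $ 2) > 0" using wpos[of n] by (simp add: c_def zero_less_divide_iff)
  have "norm (-1 - complex_of_real c' * Q $ 1 $ 2) < 1/2"
    using entry_le_mnorm[of "Tm \<omega> n v - S v" 1 2] low[OF vb] Tv Sv by simp
  then have "Re (-1 - complex_of_real c' * Q $ 1 $ 2) > -1/2"
    using abs_Re_le_cmod[of "-1 - complex_of_real c' * Q $ 1 $ 2"] by linarith
  then have "c' * Re (Q $ 1 $ 2) < 0" by simp
  then have rq: "Re (Q $ 1 $ 2) < 0" using wpos[of "Suc n"] by (simp add: c'_def divide_less_0_iff)
  show False by (rule idem_contra[OF PP QQ PQ QP rp rq])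
qed



lemma zero_ball: "(\<lambda>k. 0) \<in> unit_ball_l1w \<omega>"
  by (simp add: unit_ball_l1w_def l1w_def wnorm_def)

theorem theoremt:
  fixes \<omega> :: "nat \<Rightarrow> real"
  assumes "\<forall>n. \<omega> n \<ge> 1"
    and "\<not> bdd_above (range (\<lambda>n. min (\<omega> n) (\<omega> (Suc n))))"
  shows "\<not> AMNM_pair \<omega>"
proof
  note w = assms(1)
  assume "AMNM_pair \<omega>"
  then obtain \<delta> where d0: "\<delta> > 0" and H: "\<And>T. bdd_lin \<omega> T \<and> opn \<omega> T \<le> 2 \<and> mult_defect \<omega> T \<le> \<delta>
        \<longrightarrow> dist_Mult \<omega> T \<le> 1/4"
  proof -
    have "\<forall>K>0. \<forall>\<epsilon>>0. \<exists>\<delta>>0. \<forall>T. bdd_lin \<omega> T \<and> opn \<omega> T \<le> K \<and> mult_defect \<omega> T \<le> \<delta>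
        \<longrightarrow> dist_Mult \<omega> T \<le> \<epsilon>" using \<open>AMNM_pair \<omega>\<close> unfolding AMNM_pair_def .
    note A = this[rule_format, of 2 "1/4"]
    have "\<exists>\<delta>>0. \<forall>T. bdd_lin \<omega> T \<and> opn \<omega> T \<le> 2 \<and> mult_defect \<omega> T \<le> \<delta>
        \<longrightarrow> dist_Mult \<omega> T \<le> 1/4" using A by simp
    then show ?thesis using that by blast
  qed
  obtain n where n: "min (\<omega> n) (\<omega> (Suc n)) > 4 / \<delta>"
  proof -
    have "\<not> (\<forall>x\<in>range (\<lambda>n. min (\<omega> n) (\<omega> (Suc n))). x \<le> 4 / \<delta>)"
      using assms(2) unfolding bdd_above_def by blast
    then obtain k where "\<not> min (\<omega> k) (\<omega> (Suc k)) \<le> 4 / \<delta>" by blast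
    then show ?thesis using that[of k] by (simp add: not_le)
  qed
  define M where "M = min (\<omega> n) (\<omega> (Suc n))"
  have M0: "M > 0" using n d0 unfolding M_def by (smt (verit) divide_pos_pos zero_less_numeral)
  have Md: "4 / M \<le> \<delta>" using n M0 d0 unfolding M_def[symmetric]
    by (simp add: field_simps)
  have bl: "bdd_lin \<omega> (Tm \<omega> n)" by (rule bdd_lin_Tm[OF w])
  have op: "opn \<omega> (Tm \<omega> n) \<le> 2"
    unfolding opn_def
  proof (rule cSUP_least)
    show "unit_ball_l1w \<omega> \<noteq> {}" using zero_ball by blast
    fix a assume "a \<in> unit_ball_l1w \<omega>"
    then have al: "a \<in> l1w \<omega>" and an: "wnorm \<omega> a \<le> 1" by (auto simp: unit_ball_l1w_def)
    show "mnorm (Tm \<omega> n a) \<le> 2" using mnorm_Tm[OF al w, of n] an by simp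
  qed
  have df: "mult_defect \<omega> (Tm \<omega> n) \<le> \<delta>"
    unfolding mult_defect_def
  proof (rule cSup_least)
    show "{mnorm (Tm \<omega> n (minconv a b) - Tm \<omega> n a ** Tm \<omega> n b) |a b.
            a \<in> unit_ball_l1w \<omega> \<and> b \<in> unit_ball_l1w \<omega>} \<noteq> {}"
      using zero_ball by blast
    fix x assume "x \<in> {mnorm (Tm \<omega> n (minconv a b) - Tm \<omega> n a ** Tm \<omega> n b) |a b.
            a \<in> unit_ball_l1w \<omega> \<and> b \<in> unit_ball_l1w \<omega>}"
    then obtain a b where x: "x = mnorm (Tm \<omega> n (minconv a b) - Tm \<omega> n a ** Tm \<omega> n b)"
      and a: "a \<in> unit_ball_l1w \<omega>" and b: "b \<in> unit_ball_l1w \<omega>" by blast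
    have "x \<le> 4 / M" unfolding x M_def
      using a b by (intro defect_Tm[OF w]) (auto simp: unit_ball_l1w_def)
    then show "x \<le> \<delta>" using Md by simp
  qed
  have dm: "dist_Mult \<omega> (Tm \<omega> n) \<ge> 1/2"
    unfolding dist_Mult_def
  proof (rule cINF_greatest)
    show "Mult \<omega> \<noteq> {}" using zero_Mult by blast
    fix S assume "S \<in> Mult \<omega>"
    then show "1/2 \<le> opn \<omega> (\<lambda>a. Tm \<omega> n a - S a)" by (rule opn_lower[OF w])
  qed
  show False using H[of "Tm \<omega> n"] bl op df dm by simp
qed


end
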